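(* Assume (A1)–(A2) and fix $K\ge1$. Let $v,w:[0,\infty)\times\mathbb{Z}\to\mathbb{R}$, $(t,i)\mapsto v_i(t),w_i(t)$, be continuously differentiable in $t$ and bounded on $[0,T]\times\mathbb{Z}$ for each $T>0$, such that $v$ is a subsolution and $w$ a supersolution of $$\frac{1}{\log K}\frac{d}{dt}n_i(t)=R(i\delta_K)n_i(t)+\sum_{l\in\mathbb{Z}}p((l+i)\delta_K)h_KG(lh_K)n_{l+i}(t),\quad t>0,\ i\in\mathbb{Z},$$ i.e. $v$ satisfies this with "$\le$" and $w$ with "$\ge$" in place of "$=$". If $v_i(0)\le w_i(0)$ for all $i$, then $v_i(t)\le w_i(t)$ for all $t\ge0$ and $i\in\mathbb{Z}$.
   Context: Let $R,p,G:\mathbb{R}\to\mathbb{R}$; $\delta_K>0$, $h_K:=\delta_K\log K$. (A1) $R,p$ Lipschitz with $\underline{R}\le R\le\overline{R}$, $0<\underline{p}\le p\le\overline{p}$. (A2) $G$ positive continuous, $\int G=1$, $G(x)=f(x)e^{-|x|}$ with $0<\min f\le f\le\sup f<\infty$. *)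

theory Defs
  imports "HOL-Analysis.Analysis"
begin

definition A1 :: "(real \<Rightarrow> real) \<Rightarrow> (real \<Rightarrow> real) \<Rightarrow> bool" where
  "A1 R p \<longleftrightarrow>
     (\<exists>L. L-lipschitz_on UNIV R) \<and> (\<exists>L. L-lipschitz_on UNIV p) \<and>
     (\<exists>Rlo Rhi. \<forall>x. Rlo \<le> R x \<and> R x \<le> Rhi) \<and>
     (\<exists>plo phi. 0 < plo \<and> (\<forall>x. plo \<le> p x \<and> p x \<le> phi))"

definition A2 :: "(real \<Rightarrow> real) \<Rightarrow> bool" where
  "A2 G \<longleftrightarrow>
     (\<forall>x. 0 < G x) \<and> continuous_on UNIV G \<and> (G has_integral 1) UNIV \<and>
     (\<exists>f c C. 0 < c \<and> (\<forall>x. c \<le> f x \<and> f x \<le> C \<and> G x = f x * exp (- \<bar>x\<bar>)))"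

definition hK :: "real \<Rightarrow> real \<Rightarrow> real" where
  "hK \<delta> K = \<delta> * ln K"

definition rhs :: "(real \<Rightarrow> real) \<Rightarrow> (real \<Rightarrow> real) \<Rightarrow> (real \<Rightarrow> real) \<Rightarrow> real \<Rightarrow> real
    \<Rightarrow> (int \<Rightarrow> real) \<Rightarrow> int \<Rightarrow> real" where
  "rhs R p G \<delta> K n i =
     R (of_int i * \<delta>) * n i +
     (\<Sum>\<^sub>\<infinity>l::int. p (of_int (l + i) * \<delta>) * hK \<delta> K * G (of_int l * hK \<delta> K) * n (l + i))"

end

theory Submission
  imports Defs
begin

lemma exp_int_summable:
  fixes h :: real assumes h: "0 < h"
  shows "(\<lambda>l::int. exp (- \<bar>real_of_int l\<bar> * h)) summable_on UNIV"
proof -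
  let ?f = "\<lambda>l::int. exp (- \<bar>real_of_int l\<bar> * h)"
  have g: "(\<lambda>n::nat. exp (-h) ^ n) summable_on UNIV"
    by (rule norm_summable_imp_summable_on) (simp add: summable_geometric h)
  have e1: "(?f \<circ> int) = (\<lambda>n. exp (-h) ^ n)"
    by (auto simp: fun_eq_iff exp_of_nat_mult[symmetric] algebra_simps)
  have 1: "?f summable_on range int"
    using summable_on_reindex[of int UNIV ?f] g e1 by simp
  have e2: "(?f \<circ> (\<lambda>n::nat. - int n - 1)) = (\<lambda>n. exp (-h) ^ Suc n)"
    apply (auto simp: fun_eq_iff simp del: power_Suc)
    apply (subst exp_of_nat_mult[symmetric]) using h by (simp add: algebra_simps)
  have g2: "(\<lambda>n::nat. exp (-h) ^ Suc n) summable_on UNIV"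
    using g by (rule summable_on_comparison_test) (use h in \<open>auto simp: power_le_one mult_left_le_one_le\<close>)
  have inj: "inj (\<lambda>n::nat. - int n - 1)" by (auto simp: inj_def)
  have 2: "?f summable_on range (\<lambda>n::nat. - int n - 1)"
    using summable_on_reindex[OF inj, of ?f] g2 e2 by simp
  have U: "UNIV = range int \<union> range (\<lambda>n::nat. - int n - 1)"
  proof -
    have "x \<in> range int \<union> range (\<lambda>n::nat. - int n - 1)" for x :: int
    proof (cases "x \<ge> 0")
      case True then show ?thesis by (metis UnI1 nonneg_int_cases rangeI)
    next
      case False
      then have "x = - int (nat (-x-1)) - 1" by simp
      then show ?thesis by (metis UnI2 rangeI)
    qed
    then show ?thesis by blast
  qed
  have "?f summable_on (range int \<union> range (\<lambda>n::nat. - int n - 1))"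
    by (rule summable_on_Un_disjoint[OF 1 2]) auto
  then show ?thesis using U by simp
qed

lemma key_ineq:
  fixes R p G :: "real \<Rightarrow> real" and \<delta> K :: real
  assumes A1: "A1 R p" and A2: "A2 G" and K: "1 < K" and d: "0 < \<delta>"
  shows "\<exists>A\<ge>0. \<forall>n1 n2 m i. (\<exists>B. \<forall>j. \<bar>n1 j\<bar> \<le> B) \<longrightarrow> (\<exists>B. \<forall>j. \<bar>n2 j\<bar> \<le> B) \<longrightarrow> 0 \<le> m
      \<longrightarrow> (\<forall>j. n1 j - n2 j \<le> m)
      \<longrightarrow> rhs R p G \<delta> K n1 i - rhs R p G \<delta> K n2 i \<le> R (of_int i * \<delta>) * (n1 i - n2 i) + A * m"
proof -
  define h where "h = hK \<delta> K"
  obtain plo phi where pb: "0 < plo" "\<And>x. plo \<le> p x \<and> p x \<le> phi"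
    using A1 unfolding A1_def by blast
  obtain f c C where fb: "0 < c" "\<And>x. c \<le> f x \<and> f x \<le> C \<and> G x = f x * exp (- \<bar>x\<bar>)"
    using A2 unfolding A2_def by blast
  have Gpos: "\<And>x. 0 < G x" using A2 unfolding A2_def by blast
  have hpos: "0 < h" unfolding h_def hK_def using d K by simp
  define E where "E = (\<lambda>l::int. exp (- \<bar>real_of_int l\<bar> * h))"
  have Es: "E summable_on UNIV" using exp_int_summable[OF hpos] by (simp only: E_def)
  define a where "a = (\<lambda>i l::int. p (of_int (l + i) * \<delta>) * hK \<delta> K * G (of_int l * hK \<delta> K))"
  have a_nn: "0 \<le> a i l" for i l
    unfolding a_def h_def[symmetric] using pb(1) pb(2)[of "of_int (l + i) * \<delta>"] Gpos[of "of_int l * h"] hpos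
    by (intro mult_nonneg_nonneg) auto
  have a_le: "a i l \<le> phi * h * C * E l" for i l
  proof -
    have fx: "c \<le> f (of_int l * h) \<and> f (of_int l * h) \<le> C \<and> G (of_int l * h) = f (of_int l * h) * exp (- \<bar>of_int l * h\<bar>)"
      by (rule fb(2))
    have "\<bar>of_int l * h\<bar> = \<bar>real_of_int l\<bar> * h" using hpos by (simp add: abs_mult)
    then have Gl: "G (of_int l * h) \<le> C * E l" unfolding E_def using fx
      by (simp add: mult_right_mono)
    have p1: "p (of_int (l + i) * \<delta>) \<le> phi" using pb(2) by blast
    have p0: "0 \<le> p (of_int (l + i) * \<delta>)" using pb by (meson less_le_trans less_imp_le)
    have "a i l = (p (of_int (l + i) * \<delta>) * h) * G (of_int l * h)" unfolding a_def h_def by simp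
    also have "\<dots> \<le> (phi * h) * (C * E l)"
      by (rule mult_mono) (use p1 p0 hpos Gl Gpos[of "of_int l * h"] in \<open>auto intro: mult_right_mono less_imp_le\<close>)
    finally show ?thesis by (simp add: mult.assoc)
  qed
  define A where "A = phi * h * C * infsum E UNIV"
  have Asum: "(\<lambda>l. phi * h * C * E l) summable_on UNIV" by (rule summable_on_cmult_right[OF Es])
  have a_s: "a i summable_on UNIV" for i
    by (rule summable_on_comparison_test[OF Asum]) (simp_all add: a_le a_nn)
  have a_A: "infsum (a i) UNIV \<le> A" for i
  proof -
    have "infsum (a i) UNIV \<le> infsum (\<lambda>l. phi * h * C * E l) UNIV"
      by (rule infsum_mono[OF a_s Asum a_le])
    also have "\<dots> = A" unfolding A_def by (rule infsum_cmult_right) (rule Es)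
    finally show ?thesis .
  qed
  have A0: "0 \<le> A"
  proof -
    have "0 \<le> infsum (a 0) UNIV" by (rule infsum_nonneg) (rule a_nn)
    then show ?thesis using a_A[of 0] by linarith
  qed
  have an_s: "(\<lambda>l. a i l * n (l + i)) summable_on UNIV" if "\<forall>j. \<bar>n j\<bar> \<le> B" for n B i
  proof -
    have "(\<lambda>l. B * a i l) summable_on UNIV" by (rule summable_on_cmult_right[OF a_s])
    then have "(\<lambda>l. norm (B * a i l)) summable_on UNIV" by (rule summable_on_iff_abs_summable_on_real[THEN iffD1])
    then have "(\<lambda>l. norm (a i l * n (l + i))) summable_on UNIV"
    proof (rule summable_on_comparison_test)
      fix l :: int
      show "0 \<le> norm (a i l * n (l + i))" by simp
      have "\<bar>a i l * n (l + i)\<bar> \<le> a i l * B" using that a_nn[of i l]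
        by (simp add: abs_mult mult_left_mono)
      then show "norm (a i l * n (l + i)) \<le> norm (B * a i l)" by (simp add: mult.commute)
    qed
    then show ?thesis by (rule summable_on_iff_abs_summable_on_real[THEN iffD2])
  qed
  show ?thesis
  proof (intro exI[of _ A] conjI allI impI A0)
    fix n1 n2 :: "int \<Rightarrow> real" and m :: real and i :: int
    assume b1: "\<exists>B. \<forall>j. \<bar>n1 j\<bar> \<le> B" and b2: "\<exists>B. \<forall>j. \<bar>n2 j\<bar> \<le> B" and m0: "0 \<le> m"
      and um: "\<forall>j. n1 j - n2 j \<le> m"
    obtain B1 where B1: "\<forall>j. \<bar>n1 j\<bar> \<le> B1" using b1 by blast
    obtain B2 where B2: "\<forall>j. \<bar>n2 j\<bar> \<le> B2" using b2 by blast
    define u where "u = (\<lambda>j. n1 j - n2 j)"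
    have Bu: "\<forall>j. \<bar>u j\<bar> \<le> B1 + B2"
    proof
      fix j
      have "\<bar>n1 j\<bar> \<le> B1" "\<bar>n2 j\<bar> \<le> B2" using B1 B2 by blast+
      moreover have "\<bar>n1 j - n2 j\<bar> \<le> \<bar>n1 j\<bar> + \<bar>n2 j\<bar>" by (rule abs_triangle_ineq4)
      ultimately show "\<bar>u j\<bar> \<le> B1 + B2" unfolding u_def by linarith
    qed
    have s1: "(\<lambda>l. a i l * n1 (l + i)) summable_on UNIV" by (rule an_s[OF B1])
    have s2: "(\<lambda>l. a i l * n2 (l + i)) summable_on UNIV" by (rule an_s[OF B2])
    have su: "(\<lambda>l. a i l * u (l + i)) summable_on UNIV" by (rule an_s[OF Bu])
    have "infsum (\<lambda>l. a i l * n1 (l + i)) UNIV = infsum (\<lambda>l. a i l * u (l + i) + a i l * n2 (l + i)) UNIV"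
      by (intro infsum_cong) (simp add: u_def right_diff_distrib)
    also have "\<dots> = infsum (\<lambda>l. a i l * u (l + i)) UNIV + infsum (\<lambda>l. a i l * n2 (l + i)) UNIV"
      by (rule infsum_add[OF su s2])
    finally have eq: "infsum (\<lambda>l. a i l * n1 (l + i)) UNIV - infsum (\<lambda>l. a i l * n2 (l + i)) UNIV
        = infsum (\<lambda>l. a i l * u (l + i)) UNIV" by simp
    have aum: "a i l * u (l + i) \<le> m * a i l" for l
      using mult_left_mono[OF spec[OF um, of "l+i"] a_nn[of i l]] by (simp add: u_def mult.commute)
    have "infsum (\<lambda>l. a i l * u (l + i)) UNIV \<le> infsum (\<lambda>l. m * a i l) UNIV"
      by (rule infsum_mono[OF su summable_on_cmult_right[OF a_s]]) (rule aum)
    also have "\<dots> = m * infsum (a i) UNIV" by (rule infsum_cmult_right) (rule a_s)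
    also have "\<dots> \<le> m * A" by (rule mult_left_mono[OF a_A m0])
    finally have le: "infsum (\<lambda>l. a i l * u (l + i)) UNIV \<le> A * m" by (simp add: mult.commute)
    have rd: "rhs R p G \<delta> K n i = R (of_int i * \<delta>) * n i + infsum (\<lambda>l. a i l * n (l + i)) UNIV" for n
      unfolding rhs_def a_def by simp
    show "rhs R p G \<delta> K n1 i - rhs R p G \<delta> K n2 i \<le> R (of_int i * \<delta>) * (n1 i - n2 i) + A * m"
    proof -
      have "R (of_int i * \<delta>) * (n1 i - n2 i) = R (of_int i * \<delta>) * n1 i - R (of_int i * \<delta>) * n2 i"
        by (rule right_diff_distrib)
      then show ?thesis unfolding rd using eq le by linarith
    qed
  qed
qed

theorem proposition3p3:
  fixes R p G :: "real \<Rightarrow> real" and \<delta> K :: real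
    and v w v' w' :: "real \<Rightarrow> int \<Rightarrow> real"
  assumes A1: "A1 R p" and A2: "A2 G"
    and delta_pos: "0 < \<delta>" and K_ge: "1 \<le> K"
    and v_deriv: "\<And>i t. 0 \<le> t \<Longrightarrow> ((\<lambda>s. v s i) has_real_derivative v' t i) (at t within {0..})"
    and w_deriv: "\<And>i t. 0 \<le> t \<Longrightarrow> ((\<lambda>s. w s i) has_real_derivative w' t i) (at t within {0..})"
    and v'_cont: "\<And>i. continuous_on {0..} (\<lambda>t. v' t i)"
    and w'_cont: "\<And>i. continuous_on {0..} (\<lambda>t. w' t i)"
    and v_bdd: "\<And>T. 0 < T \<Longrightarrow> \<exists>M. \<forall>t\<in>{0..T}. \<forall>i. \<bar>v t i\<bar> \<le> M"
    and w_bdd: "\<And>T. 0 < T \<Longrightarrow> \<exists>M. \<forall>t\<in>{0..T}. \<forall>i. \<bar>w t i\<bar> \<le> M"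
    and v_sub: "\<And>t i. 0 < t \<Longrightarrow> v' t i \<le> ln K * rhs R p G \<delta> K (v t) i"
    and w_super: "\<And>t i. 0 < t \<Longrightarrow> w' t i \<ge> ln K * rhs R p G \<delta> K (w t) i"
    and init: "\<And>i. v 0 i \<le> w 0 i"
  shows "\<forall>t\<ge>0. \<forall>i. v t i \<le> w t i"
proof -
  define L where "L = ln K"
  have L0: "0 \<le> L" unfolding L_def using K_ge by simp
  define u where "u = (\<lambda>t i. v t i - w t i)"
  define u' where "u' = (\<lambda>t i. v' t i - w' t i)"
  have uder: "((\<lambda>s. u s i) has_real_derivative u' t i) (at t)" if "0 < t" for t i
  proof -
    have e: "at t within {0..} = at t" using that by (intro at_within_interior) simp
    show ?thesis unfolding u_def u'_def
      using DERIV_diff[OF v_deriv[of t i] w_deriv[of t i]] that e by simp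
  qed
  have ucont: "continuous_on {0..} (\<lambda>s. u s i)" for i
    unfolding u_def
    by (intro continuous_on_diff DERIV_continuous_on[of "{0..}" "\<lambda>s. v s i" "\<lambda>t. v' t i"]
        DERIV_continuous_on[of "{0..}" "\<lambda>s. w s i" "\<lambda>t. w' t i"] v_deriv w_deriv) auto
  obtain A where A0: "0 \<le> A" and Akey: "\<And>t i m. 0 < t \<Longrightarrow> 0 \<le> m \<Longrightarrow> (\<forall>j. u t j \<le> m)
      \<Longrightarrow> u' t i \<le> L * R (of_int i * \<delta>) * u t i + L * A * m"
  proof (cases "K = 1")
    case True
    then have "L = 0" unfolding L_def by simp
    show ?thesis
    proof (rule that[of 0])
      fix t m :: real and i
      assume "0 < t"
      then show "u' t i \<le> L * R (of_int i * \<delta>) * u t i + L * 0 * m"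
        using v_sub[of t i] w_super[of t i] True \<open>L = 0\<close> unfolding u'_def by simp
    qed simp
  next
    case False
    then have K1: "1 < K" using K_ge by simp
    obtain A where A0: "0 \<le> A" and Ak: "\<forall>n1 n2 m i. (\<exists>B. \<forall>j. \<bar>n1 j\<bar> \<le> B) \<longrightarrow> (\<exists>B. \<forall>j. \<bar>n2 j\<bar> \<le> B) \<longrightarrow> 0 \<le> m
      \<longrightarrow> (\<forall>j. n1 j - n2 j \<le> m)
      \<longrightarrow> rhs R p G \<delta> K n1 i - rhs R p G \<delta> K n2 i \<le> R (of_int i * \<delta>) * (n1 i - n2 i) + A * m"
      using key_ineq[OF A1 A2 K1 delta_pos] by blast
    show ?thesis
    proof (rule that[OF A0])
      fix t m :: real and i
      assume t: "0 < t" and m: "0 \<le> m" and um: "\<forall>j. u t j \<le> m"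
      obtain M1 where M1: "\<forall>s\<in>{0..t}. \<forall>i. \<bar>v s i\<bar> \<le> M1" using v_bdd[OF t] by blast
      obtain M2 where M2: "\<forall>s\<in>{0..t}. \<forall>i. \<bar>w s i\<bar> \<le> M2" using w_bdd[OF t] by blast
      have b1: "\<exists>B. \<forall>j. \<bar>v t j\<bar> \<le> B" using M1 t by (intro exI[of _ M1]) auto
      have b2: "\<exists>B. \<forall>j. \<bar>w t j\<bar> \<le> B" using M2 t by (intro exI[of _ M2]) auto
      have "rhs R p G \<delta> K (v t) i - rhs R p G \<delta> K (w t) i \<le> R (of_int i * \<delta>) * (v t i - w t i) + A * m"
        using Ak b1 b2 m um unfolding u_def by blast
      then have "L * (rhs R p G \<delta> K (v t) i - rhs R p G \<delta> K (w t) i) \<le> L * (R (of_int i * \<delta>) * (v t i - w t i) + A * m)"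
        by (rule mult_left_mono[OF _ L0])
      then show "u' t i \<le> L * R (of_int i * \<delta>) * u t i + L * A * m"
        using v_sub[OF t, of i] w_super[OF t, of i] unfolding u'_def u_def L_def
        by (simp add: algebra_simps)
    qed
  qed
  obtain RB where RB: "\<And>x. \<bar>R x\<bar> \<le> RB"
  proof -
    obtain Rlo Rhi where "\<forall>x. Rlo \<le> R x \<and> R x \<le> Rhi" using A1 unfolding A1_def by blast
    then have Rb: "Rlo \<le> R x \<and> R x \<le> Rhi" for x by blast
    show ?thesis
    proof (rule that[of "max \<bar>Rlo\<bar> \<bar>Rhi\<bar>"])
      fix x
      from Rb[of x] show "\<bar>R x\<bar> \<le> max \<bar>Rlo\<bar> \<bar>Rhi\<bar>" by linarith
    qed
  qed
  have RB0: "0 \<le> RB" using RB[of 0] by simp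
  define \<Lambda> where "\<Lambda> = L * RB"
  have Lam0: "0 \<le> \<Lambda>" unfolding \<Lambda>_def using L0 RB0 by simp
  define \<tau> where "\<tau> = 1 / (2 * exp (2 * \<Lambda>) * (L * A + 1))"
  have LA0: "0 \<le> L * A" using L0 A0 by simp
  have tau0: "0 < \<tau>" unfolding \<tau>_def using LA0 by simp
  have den: "1 \<le> 2 * exp (2 * \<Lambda>) * (L * A + 1)"
  proof -
    have "1 \<le> exp (2 * \<Lambda>)" using Lam0 by simp
    moreover have "1 \<le> L * A + 1" using LA0 by simp
    ultimately have "1 \<le> exp (2 * \<Lambda>) * (L * A + 1)" by (metis mult_mono' mult_1 zero_le_one)
    then show ?thesis by simp
  qed
  have tau1: "\<tau> \<le> 1" unfolding \<tau>_def using den LA0 by (simp add: divide_le_eq_1)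
  have small: "exp (2 * \<Lambda> * \<tau>) * (L * A) * \<tau> \<le> 1 / 2"
  proof -
    have e1: "exp (2 * \<Lambda> * \<tau>) \<le> exp (2 * \<Lambda>)"
      using Lam0 tau1 by (simp add: mult_left_le)
    have e2: "(L * A) * \<tau> \<le> (L * A + 1) * \<tau>" using tau0 by simp
    have e3: "(L * A + 1) * \<tau> = 1 / (2 * exp (2 * \<Lambda>))"
    proof -
      have n1: "L * A + 1 \<noteq> 0" using LA0 by linarith
      show ?thesis unfolding \<tau>_def using n1 by (simp add: divide_simps)
    qed
    have "exp (2 * \<Lambda> * \<tau>) * (L * A) * \<tau> = exp (2 * \<Lambda> * \<tau>) * ((L * A) * \<tau>)"
      by (simp only: mult.assoc)
    also have "\<dots> \<le> exp (2 * \<Lambda>) * ((L * A + 1) * \<tau>)"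
      by (rule mult_mono[OF e1 e2]) (use LA0 tau0 in auto)
    also have "\<dots> = 1 / 2" unfolding e3 by simp
    finally show ?thesis .
  qed
  have step: "\<forall>t\<in>{t0..t0+\<tau>}. \<forall>i. u t i \<le> M / 2"
    if t0: "0 \<le> t0" and ut0: "\<forall>i. u t0 i \<le> 0" and M0: "0 \<le> M" and uM: "\<forall>t\<in>{t0..t0+\<tau>}. \<forall>i. u t i \<le> M"
    for t0 M
  proof (intro ballI allI)
    fix t i assume tI: "t \<in> {t0..t0+\<tau>}"
    show "u t i \<le> M / 2"
    proof (cases "t = t0")
      case True
      have "u t i \<le> 0" using ut0 True by simp
      then show ?thesis using M0 by simp
    next
      case False
      then have tt: "t0 < t" "t \<le> t0 + \<tau>" using tI by auto
      define lam where "lam = L * R (of_int i * \<delta>)"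
      have lam: "\<bar>lam\<bar> \<le> \<Lambda>" unfolding lam_def \<Lambda>_def using L0 RB[of "of_int i * \<delta>"]
        by (simp add: abs_mult mult_left_mono)
      define D where "D = exp (\<Lambda> * \<tau>) * (L * A) * M"
      have D0: "0 \<le> D" unfolding D_def using LA0 M0 by simp
      define phi where "phi = (\<lambda>s. exp (- lam * (s - t0)) * u s i - D * (s - t0))"
      have dec: "phi t \<le> phi t0"
      proof (rule DERIV_nonpos_imp_decreasing_open[OF less_imp_le[OF tt(1)]])
        show "continuous_on {t0..t} phi" unfolding phi_def
          by (intro continuous_intros continuous_on_subset[OF ucont]) (use t0 in auto)
      next
        fix s assume s: "t0 < s" "s < t"
        have s0: "0 < s" using s t0 by simp
        have d: "(phi has_real_derivative (exp (- lam * (s - t0)) * (u' s i - lam * u s i) - D)) (at s)"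
          unfolding phi_def
          by (auto intro!: derivative_eq_intros uder[OF s0] simp: algebra_simps)
        have ex: "exp (- lam * (s - t0)) \<le> exp (\<Lambda> * \<tau>)"
        proof -
          have "- lam * (s - t0) \<le> \<bar>lam\<bar> * (s - t0)" using s by (intro mult_right_mono) auto
          also have "\<dots> \<le> \<Lambda> * \<tau>" using lam s tt Lam0 by (intro mult_mono) auto
          finally show ?thesis by simp
        qed
        have sI: "s \<in> {t0..t0+\<tau>}" using s tt by auto
        have ku: "u' s i - lam * u s i \<le> L * A * M"
          using Akey[OF s0 M0, of i] uM sI unfolding lam_def by auto
        have "exp (- lam * (s - t0)) * (u' s i - lam * u s i) \<le> exp (- lam * (s - t0)) * (L * A * M)"
          by (rule mult_left_mono[OF ku]) simp
        also have "\<dots> \<le> exp (\<Lambda> * \<tau>) * (L * A * M)"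
          by (rule mult_right_mono[OF ex]) (use LA0 M0 in simp)
        finally have "exp (- lam * (s - t0)) * (u' s i - lam * u s i) - D \<le> 0"
          unfolding D_def by (simp add: mult.assoc)
        then show "\<exists>y. (phi has_real_derivative y) (at s) \<and> y \<le> 0" using d by blast
      qed
      have p0: "phi t0 = u t0 i" unfolding phi_def by simp
      have pt: "phi t = exp (- lam * (t - t0)) * u t i - D * (t - t0)" unfolding phi_def by simp
      have "u t0 i \<le> 0" using ut0 by blast
      then have "exp (- lam * (t - t0)) * u t i \<le> D * (t - t0)"
        using dec p0 pt by linarith
      also have "\<dots> \<le> D * \<tau>" using tt D0 by (intro mult_left_mono) auto
      finally have h1: "exp (- lam * (t - t0)) * u t i \<le> D * \<tau>" .
      have "u t i = exp (lam * (t - t0)) * (exp (- lam * (t - t0)) * u t i)"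
        by (simp add: mult.assoc[symmetric] exp_add[symmetric])
      also have "\<dots> \<le> exp (lam * (t - t0)) * (D * \<tau>)"
        by (rule mult_left_mono[OF h1]) simp
      also have "\<dots> \<le> exp (\<Lambda> * \<tau>) * (D * \<tau>)"
      proof (rule mult_right_mono)
        have "lam * (t - t0) \<le> \<bar>lam\<bar> * (t - t0)" using tt by (intro mult_right_mono) auto
        also have "\<dots> \<le> \<Lambda> * \<tau>" using lam tt Lam0 by (intro mult_mono) auto
        finally show "exp (lam * (t - t0)) \<le> exp (\<Lambda> * \<tau>)" by simp
        show "0 \<le> D * \<tau>" using D0 tau0 by simp
      qed
      also have "\<dots> = (exp (2 * \<Lambda> * \<tau>) * (L * A) * \<tau>) * M"
      proof -
        have "exp (2 * \<Lambda> * \<tau>) = exp (\<Lambda> * \<tau>) * exp (\<Lambda> * \<tau>)"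
          by (simp add: exp_add[symmetric])
        then show ?thesis unfolding D_def by (simp add: algebra_simps)
      qed
      also have "\<dots> \<le> (1 / 2) * M" by (rule mult_right_mono[OF small M0])
      finally show ?thesis by simp
    qed
  qed
  have iter: "\<forall>t\<in>{t0..t0+\<tau>}. \<forall>i. u t i \<le> 0" if t0: "0 \<le> t0" and ut0: "\<forall>i. u t0 i \<le> 0" for t0
  proof -
    have T: "0 < t0 + \<tau>" using t0 tau0 by simp
    obtain M1 where M1: "\<forall>s\<in>{0..t0 + \<tau>}. \<forall>i. \<bar>v s i\<bar> \<le> M1" using v_bdd[OF T] by blast
    obtain M2 where M2: "\<forall>s\<in>{0..t0 + \<tau>}. \<forall>i. \<bar>w s i\<bar> \<le> M2" using w_bdd[OF T] by blast
    define Mb where "Mb = M1 + M2"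
    have Mb0: "0 \<le> Mb" unfolding Mb_def using M1 M2 T
      by (metis abs_ge_zero add_nonneg_nonneg atLeastAtMost_iff less_imp_le order.trans order_refl)
    have uMb: "\<forall>t\<in>{t0..t0+\<tau>}. \<forall>i. u t i \<le> Mb"
    proof (intro ballI allI)
      fix t i assume "t \<in> {t0..t0+\<tau>}"
      then have "t \<in> {0..t0+\<tau>}" using t0 by auto
      then have "\<bar>v t i\<bar> \<le> M1" "\<bar>w t i\<bar> \<le> M2" using M1 M2 by auto
      then show "u t i \<le> Mb" unfolding u_def Mb_def by linarith
    qed
    have n: "\<forall>t\<in>{t0..t0+\<tau>}. \<forall>i. u t i \<le> Mb / 2 ^ n" for n :: nat
    proof (induction n)
      case 0
      then show ?case using uMb by simp
    next
      case (Suc n)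
      have "\<forall>t\<in>{t0..t0+\<tau>}. \<forall>i. u t i \<le> (Mb / 2 ^ n) / 2"
        by (rule step[OF t0 ut0 _ Suc]) (use Mb0 in simp)
      then show ?case by (simp add: field_simps)
    qed
    show ?thesis
    proof (intro ballI allI)
      fix t i assume ti: "t \<in> {t0..t0+\<tau>}"
      show "u t i \<le> 0"
      proof (rule ccontr)
        assume "\<not> u t i \<le> 0"
        then have up: "0 < u t i" by simp
        obtain k :: nat where "Mb / u t i < 2 ^ k" using real_arch_pow[of 2 "Mb / u t i"] by auto
        then have "Mb / 2 ^ k < u t i" using up by (simp add: field_simps)
        moreover have "u t i \<le> Mb / 2 ^ k" using n[of k] ti by blast
        ultimately show False by linarith
      qed
    qed
  qed
  have all: "\<forall>t\<in>{0..real k * \<tau>}. \<forall>i. u t i \<le> 0" for k :: nat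
  proof (induction k)
    case 0
    then show ?case using init unfolding u_def by simp
  next
    case (Suc k)
    have k0: "0 \<le> real k * \<tau>" using tau0 by simp
    have "\<forall>i. u (real k * \<tau>) i \<le> 0" using Suc k0 by auto
    from iter[OF k0 this] have I: "\<forall>t\<in>{real k * \<tau>..real k * \<tau> + \<tau>}. \<forall>i. u t i \<le> 0" .
    show ?case
    proof (intro ballI allI)
      fix t i assume t: "t \<in> {0..real (Suc k) * \<tau>}"
      show "u t i \<le> 0"
      proof (cases "t \<le> real k * \<tau>")
        case True then show ?thesis using Suc t by auto
      next
        case False then show ?thesis using I t by (auto simp: algebra_simps)
      qed
    qed
  qed
  show ?thesis
  proof (intro allI impI)
    fix t :: real and i assume t: "0 \<le> t"
    obtain k :: nat where "t / \<tau> \<le> real k" using real_arch_simple by blast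
    then have "t \<le> real k * \<tau>" using tau0 by (simp add: field_simps)
    then have "u t i \<le> 0" using all[of k] t by auto
    then show "v t i \<le> w t i" unfolding u_def by simp
  qed
qed

end
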